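(* Let $k\geq2$ and let $W\subseteq\mathbb{Z}_{3k}$, $\overline W=\mathbb{Z}_{3k}\setminus W$, satisfy: for every $i\in\mathbb{Z}_{3k}$, $|x^i\cap W|\geq2$ and $|C^i\cap\overline W|\geq2$; and for every $i\in\overline W$, $[i+2k,i+2k+\omega(i)]_{3k}\subseteq W$. Then $p^i\not\equiv0\pmod 3$ for every $i\in\overline W$.
   Context: $\mathbb{Z}_{3k}=\{0,\dots,3k-1\}$ with addition modulo $3k$; $[a,b]_{3k}$ is the cyclic closed interval from $a$ to $b$. $C^i=\{i,\dots,i+k-1\}$ (mod $3k$), $x^i=\{i,i+k,i+2k\}$. For $i\in\overline W$, $\omega(i)=\min\{t\ge0:i+k+t\in\overline W\}$. For $i\in\overline W$ the sequence $(r^i_t)_{t\ge0}\subseteq\mathbb{Z}_{3k}$ is defined by $r^i_0=i$ and $r^i_t=r^i_{t-1}+k+\omega(r^i_{t-1})$ for $t\ge1$ (all terms lie in $\overline W$), and $p^i=\max\{t\geq0:\sum_{j=0}^{t-1}\omega(r^i_j)\leq k-1\}$. *)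

theory Defs
  imports Main
begin

text \<open>Z_{3k} is represented by {0..<3k} :: nat set, with addition modulo 3k.\<close>

definition Zn :: "nat \<Rightarrow> nat set" where
  "Zn k = {0..<3*k}"

definition Wbar :: "nat \<Rightarrow> nat set \<Rightarrow> nat set" where
  "Wbar k W = Zn k - W"

definition cint :: "nat \<Rightarrow> nat \<Rightarrow> nat \<Rightarrow> nat set" where
  "cint n a b = {(a + j) mod n | j. j \<le> (b mod n + n - a mod n) mod n}"

definition Cblock :: "nat \<Rightarrow> nat \<Rightarrow> nat set" where
  "Cblock k i = {(i + j) mod (3*k) | j. j < k}"

definition xtrip :: "nat \<Rightarrow> nat \<Rightarrow> nat set" where
  "xtrip k i = {i mod (3*k), (i + k) mod (3*k), (i + 2*k) mod (3*k)}"

definition omega :: "nat \<Rightarrow> nat set \<Rightarrow> nat \<Rightarrow> nat" where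
  "omega k W i = (LEAST t. (i + k + t) mod (3*k) \<in> Wbar k W)"

fun rseq :: "nat \<Rightarrow> nat set \<Rightarrow> nat \<Rightarrow> nat \<Rightarrow> nat" where
  "rseq k W i 0 = i"
| "rseq k W i (Suc t) = (rseq k W i t + k + omega k W (rseq k W i t)) mod (3*k)"

definition pnum :: "nat \<Rightarrow> nat set \<Rightarrow> nat \<Rightarrow> nat" where
  "pnum k W i = (GREATEST t. (\<Sum>j<t. omega k W (rseq k W i j)) \<le> k - 1)"

end

theory Submission
  imports Defs
begin

lemma omega_props:
  fixes k :: nat and W :: "nat set"
  assumes "k \<ge> 1" and a: "a \<in> Wbar k W" and r: "r < 3*k"
  shows "(r + k + omega k W r) mod (3*k) \<in> Wbar k W \<and> omega k W r < 3*k"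
proof -
  define t0 where "t0 = (6*k + a - r - k) mod (3*k)"
  have aZ: "a < 3*k" using a by (auto simp: Wbar_def Zn_def)
  have "(r + k + t0) mod (3*k) = (r + k + (6*k + a - r - k)) mod (3*k)"
    unfolding t0_def by (simp add: mod_add_right_eq)
  also have "r + k + (6*k + a - r - k) = 6*k + a" using r by simp
  also have "6*k + a = a + 2*(3*k)" by simp
  also have "(a + 2*(3*k)) mod (3*k) = a" using aZ by (simp only: mod_mult_self1) simp
  finally have w: "(r + k + t0) mod (3*k) \<in> Wbar k W" using a by simp
  have "omega k W r \<le> t0" unfolding omega_def by (rule Least_le) (rule w)
  moreover have "t0 < 3*k" unfolding t0_def using assms(1) by simp
  moreover have "(r + k + omega k W r) mod (3*k) \<in> Wbar k W"
    unfolding omega_def by (rule LeastI) (rule w)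
  ultimately show ?thesis by simp
qed

theorem mainTheorem9:
  fixes k :: nat and W :: "nat set"
  assumes "k \<ge> 2"
    and "W \<subseteq> Zn k"
    and "\<forall>i \<in> Zn k. card (xtrip k i \<inter> W) \<ge> 2"
    and "\<forall>i \<in> Zn k. card (Cblock k i \<inter> Wbar k W) \<ge> 2"
    and "\<forall>i \<in> Wbar k W. cint (3*k) (i + 2*k) (i + 2*k + omega k W i) \<subseteq> W"
  shows "\<forall>i \<in> Wbar k W. \<not> (3 dvd pnum k W i)"
proof
  fix a assume a: "a \<in> Wbar k W"
  have aZ: "a < 3*k" using a by (auto simp: Wbar_def Zn_def)
  define S where "S t = (\<Sum>j<t. omega k W (rseq k W a j))" for t
  have inW: "rseq k W a t \<in> Wbar k W" for t
  proof (induction t)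
    case 0 then show ?case using a by simp
  next
    case (Suc t)
    have "rseq k W a t < 3*k" using Suc by (auto simp: Wbar_def Zn_def)
    then show ?case using omega_props[OF _ a] assms(1) by simp
  qed
  have om1: "omega k W (rseq k W a t) \<ge> 1" for t
  proof (rule ccontr)
    let ?r = "rseq k W a t"
    assume "\<not> ?thesis"
    hence o0: "omega k W ?r = 0" by simp
    have rz: "?r < 3*k" using inW[of t] by (auto simp: Wbar_def Zn_def)
    have "(?r + k + omega k W ?r) mod (3*k) \<in> Wbar k W"
      using omega_props[OF _ a rz] assms(1) by simp
    hence b: "(?r + k) mod (3*k) \<notin> W" using o0 by (simp add: Wbar_def)
    have rn: "?r \<notin> W" using inW[of t] by (simp add: Wbar_def)
    have "xtrip k ?r \<inter> W \<subseteq> {(?r + 2*k) mod (3*k)}"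
      using b rn rz by (auto simp: xtrip_def)
    hence "card (xtrip k ?r \<inter> W) \<le> card {(?r + 2*k) mod (3*k)}"
      by (rule card_mono[rotated]) simp
    moreover have "card (xtrip k ?r \<inter> W) \<ge> 2" using assms(3) rz by (simp add: Zn_def)
    ultimately show False by simp
  qed
  have Sge: "S t \<ge> t" for t
  proof -
    have "(\<Sum>j<t. (1::nat)) \<le> S t" unfolding S_def by (rule sum_mono) (rule om1)
    thus ?thesis by simp
  qed
  have closed: "rseq k W a t = (a + t*k + S t) mod (3*k)" for t
  proof (induction t)
    case 0 then show ?case using aZ by (simp add: S_def)
  next
    case (Suc t)
    have "rseq k W a (Suc t) = ((a + t*k + S t) mod (3*k) + k + omega k W (rseq k W a t)) mod (3*k)"
      using Suc by simp
    also have "\<dots> = (a + t*k + S t + k + omega k W (rseq k W a t)) mod (3*k)"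
      by (metis mod_add_left_eq add.assoc)
    also have "\<dots> = (a + Suc t * k + S (Suc t)) mod (3*k)"
      by (simp add: S_def algebra_simps)
    finally show ?case .
  qed
  define p where "p = pnum k W a"
  have pdef: "p = (GREATEST t. S t \<le> k - 1)" unfolding p_def pnum_def S_def by simp
  have bnd: "\<forall>t. S t \<le> k - 1 \<longrightarrow> t \<le> k - 1" using Sge le_trans by blast
  have Sp: "S p \<le> k - 1" unfolding pdef
    by (rule GreatestI_nat[where k=0]) (auto simp: S_def intro: bnd[rule_format])
  have Sp1: "\<not> S (Suc p) \<le> k - 1"
  proof
    assume "S (Suc p) \<le> k - 1"
    hence "Suc p \<le> p" unfolding pdef
      by (rule Greatest_le_nat) (auto intro: bnd[rule_format])
    thus False by simp
  qed
  show "\<not> 3 dvd pnum k W a"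
  proof
    assume "3 dvd pnum k W a"
    then obtain m where pm: "p = 3*m" unfolding p_def by auto
    let ?r = "rseq k W a p"
    let ?w = "omega k W ?r"
    have rz: "?r < 3*k" using inW[of p] by (auto simp: Wbar_def Zn_def)
    have wlt: "?w < 3*k" using omega_props[OF _ a rz] assms(1) by simp
    have SS: "S (Suc p) = S p + ?w" by (simp add: S_def)
    have jle: "k - S p \<le> ?w" using Sp1 SS by simp
    have rform: "?r = (a + S p) mod (3*k)"
    proof -
      have "?r = (a + S p + m * (3*k)) mod (3*k)" using closed[of p] pm by (simp add: algebra_simps)
      thus ?thesis by simp
    qed
    have "(?r + 2*k + (k - S p)) mod (3*k) = ((a + S p) + 2*k + (k - S p)) mod (3*k)"
      using rform by (metis mod_add_left_eq)
    also have "(a + S p) + 2*k + (k - S p) = a + 3*k" using Sp assms(1) by simp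
    also have "(a + 3*k) mod (3*k) = a" using aZ by simp
    finally have eq: "(?r + 2*k + (k - S p)) mod (3*k) = a" .
    have len: "((?r + 2*k + ?w) mod (3*k) + 3*k - (?r + 2*k) mod (3*k)) mod (3*k) = ?w"
    proof -
      let ?n = "3*k"
      have "((?r + 2*k + ?w) mod ?n + ?n - (?r + 2*k) mod ?n) mod ?n
          = (((?r + 2*k) mod ?n + ?w) mod ?n + ?n - (?r + 2*k) mod ?n) mod ?n"
        by (metis mod_add_left_eq)
      moreover have "\<And>x y n::nat. x < n \<Longrightarrow> y < n \<Longrightarrow> ((x + y) mod n + n - x) mod n = y"
      proof -
        fix x y n :: nat assume h: "x < n" "y < n"
        show "((x + y) mod n + n - x) mod n = y"
        proof (cases "x + y < n")
          case True then show ?thesis using h by simp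
        next
          case False
          hence "(x + y) mod n = x + y - n" using h by (simp add: le_mod_geq)
          then show ?thesis using h False by simp
        qed
      qed
      moreover have "(?r + 2*k) mod ?n < ?n" using assms(1) by simp
      ultimately show ?thesis using wlt by simp
    qed
    have "a \<in> cint (3*k) (?r + 2*k) (?r + 2*k + ?w)"
      unfolding cint_def using eq jle len by (metis (mono_tags, lifting) mem_Collect_eq)
    moreover have "cint (3*k) (?r + 2*k) (?r + 2*k + ?w) \<subseteq> W" using assms(5) inW[of p] by blast
    ultimately show False using a by (auto simp: Wbar_def)
  qed
qed

end
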